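(* Let $(H,G,\alpha,f)$ be a normalized crossed system and let $H\times G$ denote the direct product of groups. There is a bijection between the set of group homomorphisms $\psi:H\#_\alpha^f G\to H\times G$ and the set of quadruples $(s,u,r,v)$, where $s:H\to G$ and $u:H\to H$ are group homomorphisms and $r:G\to H$, $v:G\to G$ are maps, satisfying for all $g,g_1,g_2\in G$, $h\in H$: $$v(g_1)v(g_2)=s(f(g_1,g_2))v(g_1g_2),\quad r(g)u(h)=u(g\triangleright h)r(g),$$ $$r(g_1)r(g_2)=u(f(g_1,g_2))r(g_1g_2),\quad v(g)s(h)=s(g\triangleright h)v(g).$$ Under this bijection $\psi(h,g)=\big(u(h)r(g),\ s(h)v(g)\big)$.
   Context: For groups $H,G$ and a map $\alpha:G\to\mathrm{Aut}(H)$ write $g\triangleright h:=\alpha(g)(h)$. A normalized crossed system is a quadruple $(H,G,\alpha,f)$ with maps $\alpha:G\to\mathrm{Aut}(H)$, $f:G\times G\to H$, $f(1,1)=1$, such that for all $g_1,g_2,g_3\in G$, $h\in H$: (WA) $g_1\triangleright(g_2\triangleright h)=f(g_1,g_2)\big((g_1g_2)\triangleright h\big)f(g_1,g_2)^{-1}$ and (CC) $f(g_1,g_2)f(g_1g_2,g_3)=\big(g_1\triangleright f(g_2,g_3)\big)f(g_1,g_2g_3)$. The crossed product $H\#_\alpha^f G$ is the group on the set $H\times G$ with multiplication $(h_1,g_1)\cdot(h_2,g_2)=\big(h_1(g_1\triangleright h_2)f(g_1,g_2),g_1g_2\big)$ and unit $(1,1)$. *)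

theory Defs
  imports "HOL-Algebra.Group" "HOL-Library.FuncSet"
begin

text \<open>Normalized crossed system (H, G, alpha, f); alpha g acts as an automorphism of H,
  written alpha g h for g acting on h.\<close>
definition normalized_crossed_system ::
  "'h monoid \<Rightarrow> 'g monoid \<Rightarrow> ('g \<Rightarrow> 'h \<Rightarrow> 'h) \<Rightarrow> ('g \<Rightarrow> 'g \<Rightarrow> 'h) \<Rightarrow> bool" where
  "normalized_crossed_system H G \<alpha> f \<longleftrightarrow>
     group H \<and> group G \<and>
     (\<forall>g\<in>carrier G. \<alpha> g \<in> iso H H) \<and>
     (\<forall>g1\<in>carrier G. \<forall>g2\<in>carrier G. f g1 g2 \<in> carrier H) \<and>
     f \<one>\<^bsub>G\<^esub> \<one>\<^bsub>G\<^esub> = \<one>\<^bsub>H\<^esub> \<and>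
     (\<forall>g1\<in>carrier G. \<forall>g2\<in>carrier G. \<forall>h\<in>carrier H.
        \<alpha> g1 (\<alpha> g2 h) = f g1 g2 \<otimes>\<^bsub>H\<^esub> \<alpha> (g1 \<otimes>\<^bsub>G\<^esub> g2) h \<otimes>\<^bsub>H\<^esub> inv\<^bsub>H\<^esub> (f g1 g2)) \<and>
     (\<forall>g1\<in>carrier G. \<forall>g2\<in>carrier G. \<forall>g3\<in>carrier G.
        f g1 g2 \<otimes>\<^bsub>H\<^esub> f (g1 \<otimes>\<^bsub>G\<^esub> g2) g3 = \<alpha> g1 (f g2 g3) \<otimes>\<^bsub>H\<^esub> f g1 (g2 \<otimes>\<^bsub>G\<^esub> g3))"

definition crossed_product ::
  "'h monoid \<Rightarrow> 'g monoid \<Rightarrow> ('g \<Rightarrow> 'h \<Rightarrow> 'h) \<Rightarrow> ('g \<Rightarrow> 'g \<Rightarrow> 'h) \<Rightarrow> ('h \<times> 'g) monoid" where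
  "crossed_product H G \<alpha> f =
     \<lparr>carrier = carrier H \<times> carrier G,
      mult = (\<lambda>(h1, g1) (h2, g2). (h1 \<otimes>\<^bsub>H\<^esub> \<alpha> g1 h2 \<otimes>\<^bsub>H\<^esub> f g1 g2, g1 \<otimes>\<^bsub>G\<^esub> g2)),
      one = (\<one>\<^bsub>H\<^esub>, \<one>\<^bsub>G\<^esub>)\<rparr>"

definition crossed_quadruples ::
  "'h monoid \<Rightarrow> 'g monoid \<Rightarrow> ('g \<Rightarrow> 'h \<Rightarrow> 'h) \<Rightarrow> ('g \<Rightarrow> 'g \<Rightarrow> 'h)
   \<Rightarrow> (('h \<Rightarrow> 'g) \<times> ('h \<Rightarrow> 'h) \<times> ('g \<Rightarrow> 'h) \<times> ('g \<Rightarrow> 'g)) set" where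
  "crossed_quadruples H G \<alpha> f =
     {(s, u, r, v).
        s \<in> hom H G \<inter> extensional (carrier H) \<and>
        u \<in> hom H H \<inter> extensional (carrier H) \<and>
        r \<in> carrier G \<rightarrow>\<^sub>E carrier H \<and>
        v \<in> carrier G \<rightarrow>\<^sub>E carrier G \<and>
        (\<forall>g1\<in>carrier G. \<forall>g2\<in>carrier G.
           v g1 \<otimes>\<^bsub>G\<^esub> v g2 = s (f g1 g2) \<otimes>\<^bsub>G\<^esub> v (g1 \<otimes>\<^bsub>G\<^esub> g2)) \<and>
        (\<forall>g\<in>carrier G. \<forall>h\<in>carrier H.
           r g \<otimes>\<^bsub>H\<^esub> u h = u (\<alpha> g h) \<otimes>\<^bsub>H\<^esub> r g) \<and>
        (\<forall>g1\<in>carrier G. \<forall>g2\<in>carrier G.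
           r g1 \<otimes>\<^bsub>H\<^esub> r g2 = u (f g1 g2) \<otimes>\<^bsub>H\<^esub> r (g1 \<otimes>\<^bsub>G\<^esub> g2)) \<and>
        (\<forall>g\<in>carrier G. \<forall>h\<in>carrier H.
           v g \<otimes>\<^bsub>G\<^esub> s h = s (\<alpha> g h) \<otimes>\<^bsub>G\<^esub> v g)}"

end

theory Submission
  imports Defs
begin

lemma ncs_ax:
  assumes "normalized_crossed_system H G \<alpha> f"
  shows "group H" "group G" "\<And>g. g\<in>carrier G \<Longrightarrow> \<alpha> g \<in> iso H H"
   "\<And>g1 g2. g1\<in>carrier G \<Longrightarrow> g2\<in>carrier G \<Longrightarrow> f g1 g2 \<in> carrier H"
   "f \<one>\<^bsub>G\<^esub> \<one>\<^bsub>G\<^esub> = \<one>\<^bsub>H\<^esub>"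
   "\<And>g1 g2 h. g1\<in>carrier G \<Longrightarrow> g2\<in>carrier G \<Longrightarrow> h\<in>carrier H \<Longrightarrow>
        \<alpha> g1 (\<alpha> g2 h) = f g1 g2 \<otimes>\<^bsub>H\<^esub> \<alpha> (g1 \<otimes>\<^bsub>G\<^esub> g2) h \<otimes>\<^bsub>H\<^esub> inv\<^bsub>H\<^esub> (f g1 g2)"
   "\<And>g1 g2 g3. g1\<in>carrier G \<Longrightarrow> g2\<in>carrier G \<Longrightarrow> g3\<in>carrier G \<Longrightarrow>
        f g1 g2 \<otimes>\<^bsub>H\<^esub> f (g1 \<otimes>\<^bsub>G\<^esub> g2) g3 = \<alpha> g1 (f g2 g3) \<otimes>\<^bsub>H\<^esub> f g1 (g2 \<otimes>\<^bsub>G\<^esub> g3)"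
  using assms unfolding normalized_crossed_system_def by simp_all

lemma ncs_basic:
  assumes ncs: "normalized_crossed_system H G \<alpha> f"
  shows "\<And>g h. g\<in>carrier G \<Longrightarrow> h\<in>carrier H \<Longrightarrow> \<alpha> g h \<in> carrier H"
    and "\<And>g. g\<in>carrier G \<Longrightarrow> \<alpha> g \<one>\<^bsub>H\<^esub> = \<one>\<^bsub>H\<^esub>"
    and "\<And>h. h \<in> carrier H \<Longrightarrow> \<alpha> \<one>\<^bsub>G\<^esub> h = h"
    and "\<And>g. g \<in> carrier G \<Longrightarrow> f \<one>\<^bsub>G\<^esub> g = \<one>\<^bsub>H\<^esub>"
    and "\<And>g. g \<in> carrier G \<Longrightarrow> f g \<one>\<^bsub>G\<^esub> = \<one>\<^bsub>H\<^esub>"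
proof -
  interpret H: group H using ncs_ax(1)[OF ncs] .
  interpret G: group G using ncs_ax(2)[OF ncs] .
  have aiso: "\<And>g. g \<in> carrier G \<Longrightarrow> \<alpha> g \<in> iso H H" using ncs_ax(3)[OF ncs] .
  have ahom: "\<And>g. g \<in> carrier G \<Longrightarrow> \<alpha> g \<in> hom H H" using aiso iso_imp_homomorphism by blast
  show aC: "\<And>g h. g\<in>carrier G \<Longrightarrow> h\<in>carrier H \<Longrightarrow> \<alpha> g h \<in> carrier H"
    by (meson ahom hom_in_carrier)
  show a1: "\<And>g. g\<in>carrier G \<Longrightarrow> \<alpha> g \<one>\<^bsub>H\<^esub> = \<one>\<^bsub>H\<^esub>"
    using hom_one ahom H.group_axioms by blast
  note fC = ncs_ax(4)[OF ncs] and f11 = ncs_ax(5)[OF ncs] and WA = ncs_ax(6)[OF ncs] and CC = ncs_ax(7)[OF ncs]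
  show alpha1: "\<alpha> \<one>\<^bsub>G\<^esub> h = h" if h: "h \<in> carrier H" for h
  proof -
    have "\<alpha> \<one>\<^bsub>G\<^esub> (\<alpha> \<one>\<^bsub>G\<^esub> h) = \<one>\<^bsub>H\<^esub> \<otimes>\<^bsub>H\<^esub> \<alpha> (\<one>\<^bsub>G\<^esub> \<otimes>\<^bsub>G\<^esub> \<one>\<^bsub>G\<^esub>) h \<otimes>\<^bsub>H\<^esub> inv\<^bsub>H\<^esub> \<one>\<^bsub>H\<^esub>"
      using WA[of "\<one>\<^bsub>G\<^esub>" "\<one>\<^bsub>G\<^esub>" h] h f11 by simp
    also have "\<dots> = \<alpha> \<one>\<^bsub>G\<^esub> h" using aC h by simp
    finally have e: "\<alpha> \<one>\<^bsub>G\<^esub> (\<alpha> \<one>\<^bsub>G\<^esub> h) = \<alpha> \<one>\<^bsub>G\<^esub> h" .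
    have "inj_on (\<alpha> \<one>\<^bsub>G\<^esub>) (carrier H)" using aiso[of "\<one>\<^bsub>G\<^esub>"] iso_iff by auto
    then show ?thesis using e h aC by (meson G.one_closed inj_onD)
  qed
  show "f \<one>\<^bsub>G\<^esub> g = \<one>\<^bsub>H\<^esub>" if g: "g \<in> carrier G" for g
  proof -
    have "f \<one>\<^bsub>G\<^esub> \<one>\<^bsub>G\<^esub> \<otimes>\<^bsub>H\<^esub> f (\<one>\<^bsub>G\<^esub> \<otimes>\<^bsub>G\<^esub> \<one>\<^bsub>G\<^esub>) g = \<alpha> \<one>\<^bsub>G\<^esub> (f \<one>\<^bsub>G\<^esub> g) \<otimes>\<^bsub>H\<^esub> f \<one>\<^bsub>G\<^esub> (\<one>\<^bsub>G\<^esub> \<otimes>\<^bsub>G\<^esub> g)"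
      using CC[of "\<one>\<^bsub>G\<^esub>" "\<one>\<^bsub>G\<^esub>" g] g by simp
    then have "f \<one>\<^bsub>G\<^esub> g = f \<one>\<^bsub>G\<^esub> g \<otimes>\<^bsub>H\<^esub> f \<one>\<^bsub>G\<^esub> g"
      using g f11 fC alpha1 by simp
    then show ?thesis using fC g by simp
  qed
  show "f g \<one>\<^bsub>G\<^esub> = \<one>\<^bsub>H\<^esub>" if g: "g \<in> carrier G" for g
  proof -
    have "f g \<one>\<^bsub>G\<^esub> \<otimes>\<^bsub>H\<^esub> f (g \<otimes>\<^bsub>G\<^esub> \<one>\<^bsub>G\<^esub>) \<one>\<^bsub>G\<^esub> = \<alpha> g (f \<one>\<^bsub>G\<^esub> \<one>\<^bsub>G\<^esub>) \<otimes>\<^bsub>H\<^esub> f g (\<one>\<^bsub>G\<^esub> \<otimes>\<^bsub>G\<^esub> \<one>\<^bsub>G\<^esub>)"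
      using CC[of g "\<one>\<^bsub>G\<^esub>" "\<one>\<^bsub>G\<^esub>"] g by simp
    then have "f g \<one>\<^bsub>G\<^esub> \<otimes>\<^bsub>H\<^esub> f g \<one>\<^bsub>G\<^esub> = f g \<one>\<^bsub>G\<^esub>"
      using g f11 fC a1 by simp
    then show ?thesis using fC g by simp
  qed
qed


definition Phi :: "'h monoid \<Rightarrow> 'g monoid \<Rightarrow> (('h \<Rightarrow> 'g) \<times> ('h \<Rightarrow> 'h) \<times> ('g \<Rightarrow> 'h) \<times> ('g \<Rightarrow> 'g)) \<Rightarrow> ('h \<times> 'g \<Rightarrow> 'h \<times> 'g)" where
  "Phi H G = (\<lambda>(s, u, r, v). (\<lambda>x\<in>carrier H \<times> carrier G.
               (u (fst x) \<otimes>\<^bsub>H\<^esub> r (snd x), s (fst x) \<otimes>\<^bsub>G\<^esub> v (snd x))))"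

definition Psi :: "'h monoid \<Rightarrow> 'g monoid \<Rightarrow> ('h \<times> 'g \<Rightarrow> 'h \<times> 'g) \<Rightarrow> (('h \<Rightarrow> 'g) \<times> ('h \<Rightarrow> 'h) \<times> ('g \<Rightarrow> 'h) \<times> ('g \<Rightarrow> 'g))" where
  "Psi H G \<psi> = ((\<lambda>h\<in>carrier H. snd (\<psi> (h, \<one>\<^bsub>G\<^esub>))), (\<lambda>h\<in>carrier H. fst (\<psi> (h, \<one>\<^bsub>G\<^esub>))),
                 (\<lambda>g\<in>carrier G. fst (\<psi> (\<one>\<^bsub>H\<^esub>, g))), (\<lambda>g\<in>carrier G. snd (\<psi> (\<one>\<^bsub>H\<^esub>, g))))"

lemma cpm: "(h1,g1) \<otimes>\<^bsub>crossed_product H G \<alpha> f\<^esub> (h2,g2) =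
       (h1 \<otimes>\<^bsub>H\<^esub> \<alpha> g1 h2 \<otimes>\<^bsub>H\<^esub> f g1 g2, g1 \<otimes>\<^bsub>G\<^esub> g2)"
  by (simp add: crossed_product_def)

lemma cpc: "carrier (crossed_product H G \<alpha> f) = carrier H \<times> carrier G"
  by (simp add: crossed_product_def)

lemma quad_facts:
  assumes "(s, u, r, v) \<in> crossed_quadruples H G \<alpha> f"
  shows "s \<in> hom H G" "s \<in> extensional (carrier H)" "u \<in> hom H H" "u \<in> extensional (carrier H)"
    "r \<in> carrier G \<rightarrow>\<^sub>E carrier H" "v \<in> carrier G \<rightarrow>\<^sub>E carrier G"
    "\<And>g1 g2. g1\<in>carrier G \<Longrightarrow> g2\<in>carrier G \<Longrightarrow>
           v g1 \<otimes>\<^bsub>G\<^esub> v g2 = s (f g1 g2) \<otimes>\<^bsub>G\<^esub> v (g1 \<otimes>\<^bsub>G\<^esub> g2)"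
    "\<And>g h. g\<in>carrier G \<Longrightarrow> h\<in>carrier H \<Longrightarrow>
           r g \<otimes>\<^bsub>H\<^esub> u h = u (\<alpha> g h) \<otimes>\<^bsub>H\<^esub> r g"
    "\<And>g1 g2. g1\<in>carrier G \<Longrightarrow> g2\<in>carrier G \<Longrightarrow>
           r g1 \<otimes>\<^bsub>H\<^esub> r g2 = u (f g1 g2) \<otimes>\<^bsub>H\<^esub> r (g1 \<otimes>\<^bsub>G\<^esub> g2)"
    "\<And>g h. g\<in>carrier G \<Longrightarrow> h\<in>carrier H \<Longrightarrow>
           v g \<otimes>\<^bsub>G\<^esub> s h = s (\<alpha> g h) \<otimes>\<^bsub>G\<^esub> v g"
  using assms unfolding crossed_quadruples_def by simp_all

lemma fwd:
  assumes ncs: "normalized_crossed_system H G \<alpha> f"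
    and q: "(s, u, r, v) \<in> crossed_quadruples H G \<alpha> f"
  shows "Phi H G (s, u, r, v) \<in> hom (crossed_product H G \<alpha> f) (H \<times>\<times> G)"
proof -
  interpret H: group H using ncs_ax(1)[OF ncs] .
  interpret G: group G using ncs_ax(2)[OF ncs] .
  note Q = quad_facts[OF q]
  note fC = ncs_ax(4)[OF ncs] and aC = ncs_basic(1)[OF ncs]
  have uC: "\<And>h. h \<in> carrier H \<Longrightarrow> u h \<in> carrier H" by (rule hom_in_carrier[OF Q(3)])
  have sC: "\<And>h. h \<in> carrier H \<Longrightarrow> s h \<in> carrier G" by (rule hom_in_carrier[OF Q(1)])
  have rC: "\<And>g. g \<in> carrier G \<Longrightarrow> r g \<in> carrier H" by (rule PiE_mem[OF Q(5)])
  have vC: "\<And>g. g \<in> carrier G \<Longrightarrow> v g \<in> carrier G" by (rule PiE_mem[OF Q(6)])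
  have um: "\<And>x y. x \<in> carrier H \<Longrightarrow> y \<in> carrier H \<Longrightarrow> u (x \<otimes>\<^bsub>H\<^esub> y) = u x \<otimes>\<^bsub>H\<^esub> u y"
    by (rule hom_mult[OF Q(3)])
  have sm: "\<And>x y. x \<in> carrier H \<Longrightarrow> y \<in> carrier H \<Longrightarrow> s (x \<otimes>\<^bsub>H\<^esub> y) = s x \<otimes>\<^bsub>G\<^esub> s y"
    by (rule hom_mult[OF Q(1)])
  show ?thesis
  proof (rule homI)
    fix x assume "x \<in> carrier (crossed_product H G \<alpha> f)"
    then show "Phi H G (s, u, r, v) x \<in> carrier (H \<times>\<times> G)"
      by (auto simp: cpc Phi_def uC sC rC vC)
  next
    fix x y assume x: "x \<in> carrier (crossed_product H G \<alpha> f)" and y: "y \<in> carrier (crossed_product H G \<alpha> f)"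
    obtain h1 g1 where x': "x = (h1, g1)" "h1 \<in> carrier H" "g1 \<in> carrier G" using x by (cases x) (auto simp: cpc)
    obtain h2 g2 where y': "y = (h2, g2)" "h2 \<in> carrier H" "g2 \<in> carrier G" using y by (cases y) (auto simp: cpc)
    have c: "h1 \<otimes>\<^bsub>H\<^esub> \<alpha> g1 h2 \<otimes>\<^bsub>H\<^esub> f g1 g2 \<in> carrier H" "g1 \<otimes>\<^bsub>G\<^esub> g2 \<in> carrier G"
      using x' y' aC fC by auto
    have e1: "u (h1 \<otimes>\<^bsub>H\<^esub> \<alpha> g1 h2 \<otimes>\<^bsub>H\<^esub> f g1 g2) \<otimes>\<^bsub>H\<^esub> r (g1 \<otimes>\<^bsub>G\<^esub> g2)
        = (u h1 \<otimes>\<^bsub>H\<^esub> r g1) \<otimes>\<^bsub>H\<^esub> (u h2 \<otimes>\<^bsub>H\<^esub> r g2)"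
    proof -
      have "u (h1 \<otimes>\<^bsub>H\<^esub> \<alpha> g1 h2 \<otimes>\<^bsub>H\<^esub> f g1 g2) \<otimes>\<^bsub>H\<^esub> r (g1 \<otimes>\<^bsub>G\<^esub> g2)
          = u h1 \<otimes>\<^bsub>H\<^esub> u (\<alpha> g1 h2) \<otimes>\<^bsub>H\<^esub> (u (f g1 g2) \<otimes>\<^bsub>H\<^esub> r (g1 \<otimes>\<^bsub>G\<^esub> g2))"
        using x' y' aC fC c by (simp add: um uC rC H.m_assoc)
      also have "\<dots> = u h1 \<otimes>\<^bsub>H\<^esub> (u (\<alpha> g1 h2) \<otimes>\<^bsub>H\<^esub> r g1) \<otimes>\<^bsub>H\<^esub> r g2"
        using x' y' aC fC c Q(9) by (simp add: uC rC H.m_assoc)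
      also have "\<dots> = u h1 \<otimes>\<^bsub>H\<^esub> (r g1 \<otimes>\<^bsub>H\<^esub> u h2) \<otimes>\<^bsub>H\<^esub> r g2"
        using x' y' Q(8) by simp
      also have "\<dots> = (u h1 \<otimes>\<^bsub>H\<^esub> r g1) \<otimes>\<^bsub>H\<^esub> (u h2 \<otimes>\<^bsub>H\<^esub> r g2)"
        using x' y' by (simp add: uC rC H.m_assoc)
      finally show ?thesis .
    qed
    have e2: "s (h1 \<otimes>\<^bsub>H\<^esub> \<alpha> g1 h2 \<otimes>\<^bsub>H\<^esub> f g1 g2) \<otimes>\<^bsub>G\<^esub> v (g1 \<otimes>\<^bsub>G\<^esub> g2)
        = (s h1 \<otimes>\<^bsub>G\<^esub> v g1) \<otimes>\<^bsub>G\<^esub> (s h2 \<otimes>\<^bsub>G\<^esub> v g2)"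
    proof -
      have "s (h1 \<otimes>\<^bsub>H\<^esub> \<alpha> g1 h2 \<otimes>\<^bsub>H\<^esub> f g1 g2) \<otimes>\<^bsub>G\<^esub> v (g1 \<otimes>\<^bsub>G\<^esub> g2)
          = s h1 \<otimes>\<^bsub>G\<^esub> s (\<alpha> g1 h2) \<otimes>\<^bsub>G\<^esub> (s (f g1 g2) \<otimes>\<^bsub>G\<^esub> v (g1 \<otimes>\<^bsub>G\<^esub> g2))"
        using x' y' aC fC c by (simp add: sm sC vC G.m_assoc)
      also have "\<dots> = s h1 \<otimes>\<^bsub>G\<^esub> (s (\<alpha> g1 h2) \<otimes>\<^bsub>G\<^esub> v g1) \<otimes>\<^bsub>G\<^esub> v g2"
        using x' y' aC fC c Q(7) by (simp add: sC vC G.m_assoc)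
      also have "\<dots> = s h1 \<otimes>\<^bsub>G\<^esub> (v g1 \<otimes>\<^bsub>G\<^esub> s h2) \<otimes>\<^bsub>G\<^esub> v g2"
        using x' y' Q(10) by simp
      also have "\<dots> = (s h1 \<otimes>\<^bsub>G\<^esub> v g1) \<otimes>\<^bsub>G\<^esub> (s h2 \<otimes>\<^bsub>G\<^esub> v g2)"
        using x' y' by (simp add: sC vC G.m_assoc)
      finally show ?thesis .
    qed
    show "Phi H G (s, u, r, v) (x \<otimes>\<^bsub>crossed_product H G \<alpha> f\<^esub> y) =
          Phi H G (s, u, r, v) x \<otimes>\<^bsub>H \<times>\<times> G\<^esub> Phi H G (s, u, r, v) y"
      using x' y' c e1 e2 by (simp add: cpm Phi_def)
  qed
qed


lemma bwd:
  assumes ncs: "normalized_crossed_system H G \<alpha> f"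
    and psi: "\<psi> \<in> hom (crossed_product H G \<alpha> f) (H \<times>\<times> G)"
  shows "Psi H G \<psi> \<in> crossed_quadruples H G \<alpha> f"
    and "\<psi> (\<one>\<^bsub>H\<^esub>, \<one>\<^bsub>G\<^esub>) = (\<one>\<^bsub>H\<^esub>, \<one>\<^bsub>G\<^esub>)"
    and "\<And>h g. h \<in> carrier H \<Longrightarrow> g \<in> carrier G \<Longrightarrow>
          \<psi> (h, g) = (fst (\<psi> (h, \<one>\<^bsub>G\<^esub>)) \<otimes>\<^bsub>H\<^esub> fst (\<psi> (\<one>\<^bsub>H\<^esub>, g)),
                      snd (\<psi> (h, \<one>\<^bsub>G\<^esub>)) \<otimes>\<^bsub>G\<^esub> snd (\<psi> (\<one>\<^bsub>H\<^esub>, g)))"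
proof -
  interpret H: group H using ncs_ax(1)[OF ncs] .
  interpret G: group G using ncs_ax(2)[OF ncs] .
  interpret D: group "H \<times>\<times> G" by (rule DirProd_group) (unfold_locales)
  note fC = ncs_ax(4)[OF ncs] and aC = ncs_basic(1)[OF ncs] and a1 = ncs_basic(2)[OF ncs]
    and alpha1 = ncs_basic(3)[OF ncs] and f1g = ncs_basic(4)[OF ncs] and fg1 = ncs_basic(5)[OF ncs]
    and f11 = ncs_ax(5)[OF ncs]
  have psiC: "\<And>h g. h \<in> carrier H \<Longrightarrow> g \<in> carrier G \<Longrightarrow> fst (\<psi> (h, g)) \<in> carrier H \<and> snd (\<psi> (h, g)) \<in> carrier G"
  proof -
    fix h g assume "h \<in> carrier H" "g \<in> carrier G"
    then have "\<psi> (h, g) \<in> carrier (H \<times>\<times> G)" using hom_in_carrier[OF psi, of "(h,g)"] by (simp add: cpc)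
    then show "fst (\<psi> (h, g)) \<in> carrier H \<and> snd (\<psi> (h, g)) \<in> carrier G" by (auto simp: mem_Times_iff)
  qed
  have psim: "\<psi> ((h1, g1) \<otimes>\<^bsub>crossed_product H G \<alpha> f\<^esub> (h2, g2)) =
      (fst (\<psi> (h1, g1)) \<otimes>\<^bsub>H\<^esub> fst (\<psi> (h2, g2)), snd (\<psi> (h1, g1)) \<otimes>\<^bsub>G\<^esub> snd (\<psi> (h2, g2)))"
    if "h1 \<in> carrier H" "g1 \<in> carrier G" "h2 \<in> carrier H" "g2 \<in> carrier G" for h1 g1 h2 g2
    using hom_mult[OF psi, of "(h1,g1)" "(h2,g2)"] that by (simp add: cpc mult_DirProd')
  have hh: "(h, \<one>\<^bsub>G\<^esub>) \<otimes>\<^bsub>crossed_product H G \<alpha> f\<^esub> (h', \<one>\<^bsub>G\<^esub>) = (h \<otimes>\<^bsub>H\<^esub> h', \<one>\<^bsub>G\<^esub>)"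
    if "h \<in> carrier H" "h' \<in> carrier H" for h h'
    using that by (simp add: cpm alpha1 f11)
  have hg: "(h, \<one>\<^bsub>G\<^esub>) \<otimes>\<^bsub>crossed_product H G \<alpha> f\<^esub> (\<one>\<^bsub>H\<^esub>, g) = (h, g)"
    if "h \<in> carrier H" "g \<in> carrier G" for h g
    using that by (simp add: cpm alpha1 f1g)
  have gh: "(\<one>\<^bsub>H\<^esub>, g) \<otimes>\<^bsub>crossed_product H G \<alpha> f\<^esub> (h, \<one>\<^bsub>G\<^esub>) = (\<alpha> g h, \<one>\<^bsub>G\<^esub>) \<otimes>\<^bsub>crossed_product H G \<alpha> f\<^esub> (\<one>\<^bsub>H\<^esub>, g)"
    if "h \<in> carrier H" "g \<in> carrier G" for h g
    using that by (simp add: cpm alpha1 f1g fg1 aC a1)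
  have gg: "(\<one>\<^bsub>H\<^esub>, g1) \<otimes>\<^bsub>crossed_product H G \<alpha> f\<^esub> (\<one>\<^bsub>H\<^esub>, g2) = (f g1 g2, \<one>\<^bsub>G\<^esub>) \<otimes>\<^bsub>crossed_product H G \<alpha> f\<^esub> (\<one>\<^bsub>H\<^esub>, g1 \<otimes>\<^bsub>G\<^esub> g2)"
    if "g1 \<in> carrier G" "g2 \<in> carrier G" for g1 g2
    using that by (simp add: cpm alpha1 f1g fC a1)
  show p11: "\<psi> (\<one>\<^bsub>H\<^esub>, \<one>\<^bsub>G\<^esub>) = (\<one>\<^bsub>H\<^esub>, \<one>\<^bsub>G\<^esub>)"
  proof -
    have "\<psi> (\<one>\<^bsub>H\<^esub>, \<one>\<^bsub>G\<^esub>) = \<psi> ((\<one>\<^bsub>H\<^esub>, \<one>\<^bsub>G\<^esub>) \<otimes>\<^bsub>crossed_product H G \<alpha> f\<^esub> (\<one>\<^bsub>H\<^esub>, \<one>\<^bsub>G\<^esub>))"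
      using hh[of "\<one>\<^bsub>H\<^esub>" "\<one>\<^bsub>H\<^esub>"] by simp
    also have "\<dots> = \<psi> (\<one>\<^bsub>H\<^esub>, \<one>\<^bsub>G\<^esub>) \<otimes>\<^bsub>H \<times>\<times> G\<^esub> \<psi> (\<one>\<^bsub>H\<^esub>, \<one>\<^bsub>G\<^esub>)"
      using hom_mult[OF psi, of "(\<one>\<^bsub>H\<^esub>, \<one>\<^bsub>G\<^esub>)" "(\<one>\<^bsub>H\<^esub>, \<one>\<^bsub>G\<^esub>)"] by (simp add: cpc)
    finally have e: "\<psi> (\<one>\<^bsub>H\<^esub>, \<one>\<^bsub>G\<^esub>) = \<psi> (\<one>\<^bsub>H\<^esub>, \<one>\<^bsub>G\<^esub>) \<otimes>\<^bsub>H \<times>\<times> G\<^esub> \<psi> (\<one>\<^bsub>H\<^esub>, \<one>\<^bsub>G\<^esub>)" .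
    have c: "\<psi> (\<one>\<^bsub>H\<^esub>, \<one>\<^bsub>G\<^esub>) \<in> carrier (H \<times>\<times> G)"
      using hom_in_carrier[OF psi, of "(\<one>\<^bsub>H\<^esub>, \<one>\<^bsub>G\<^esub>)"] by (simp add: cpc)
    from D.l_cancel_one'[OF c c] e show ?thesis by simp
  qed
  show dec: "\<And>h g. h \<in> carrier H \<Longrightarrow> g \<in> carrier G \<Longrightarrow>
          \<psi> (h, g) = (fst (\<psi> (h, \<one>\<^bsub>G\<^esub>)) \<otimes>\<^bsub>H\<^esub> fst (\<psi> (\<one>\<^bsub>H\<^esub>, g)),
                      snd (\<psi> (h, \<one>\<^bsub>G\<^esub>)) \<otimes>\<^bsub>G\<^esub> snd (\<psi> (\<one>\<^bsub>H\<^esub>, g)))"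
    using hg psim by (metis G.one_closed H.one_closed)
  have E_gh: "fst (\<psi> (\<one>\<^bsub>H\<^esub>, g)) \<otimes>\<^bsub>H\<^esub> fst (\<psi> (h, \<one>\<^bsub>G\<^esub>)) = fst (\<psi> (\<alpha> g h, \<one>\<^bsub>G\<^esub>)) \<otimes>\<^bsub>H\<^esub> fst (\<psi> (\<one>\<^bsub>H\<^esub>, g))
     \<and> snd (\<psi> (\<one>\<^bsub>H\<^esub>, g)) \<otimes>\<^bsub>G\<^esub> snd (\<psi> (h, \<one>\<^bsub>G\<^esub>)) = snd (\<psi> (\<alpha> g h, \<one>\<^bsub>G\<^esub>)) \<otimes>\<^bsub>G\<^esub> snd (\<psi> (\<one>\<^bsub>H\<^esub>, g))"
    if "h \<in> carrier H" "g \<in> carrier G" for h g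
  proof -
    have "\<psi> ((\<one>\<^bsub>H\<^esub>, g) \<otimes>\<^bsub>crossed_product H G \<alpha> f\<^esub> (h, \<one>\<^bsub>G\<^esub>)) = \<psi> ((\<alpha> g h, \<one>\<^bsub>G\<^esub>) \<otimes>\<^bsub>crossed_product H G \<alpha> f\<^esub> (\<one>\<^bsub>H\<^esub>, g))"
      using gh[OF that] by simp
    then show ?thesis
      unfolding psim[of "\<one>\<^bsub>H\<^esub>" g h "\<one>\<^bsub>G\<^esub>", OF H.one_closed that(2) that(1) G.one_closed]
        psim[of "\<alpha> g h" "\<one>\<^bsub>G\<^esub>" "\<one>\<^bsub>H\<^esub>" g, OF aC[OF that(2) that(1)] G.one_closed H.one_closed that(2)]
      by simp
  qed
  have E_gg: "fst (\<psi> (\<one>\<^bsub>H\<^esub>, g1)) \<otimes>\<^bsub>H\<^esub> fst (\<psi> (\<one>\<^bsub>H\<^esub>, g2)) = fst (\<psi> (f g1 g2, \<one>\<^bsub>G\<^esub>)) \<otimes>\<^bsub>H\<^esub> fst (\<psi> (\<one>\<^bsub>H\<^esub>, g1 \<otimes>\<^bsub>G\<^esub> g2))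
     \<and> snd (\<psi> (\<one>\<^bsub>H\<^esub>, g1)) \<otimes>\<^bsub>G\<^esub> snd (\<psi> (\<one>\<^bsub>H\<^esub>, g2)) = snd (\<psi> (f g1 g2, \<one>\<^bsub>G\<^esub>)) \<otimes>\<^bsub>G\<^esub> snd (\<psi> (\<one>\<^bsub>H\<^esub>, g1 \<otimes>\<^bsub>G\<^esub> g2))"
    if "g1 \<in> carrier G" "g2 \<in> carrier G" for g1 g2
  proof -
    have "\<psi> ((\<one>\<^bsub>H\<^esub>, g1) \<otimes>\<^bsub>crossed_product H G \<alpha> f\<^esub> (\<one>\<^bsub>H\<^esub>, g2)) = \<psi> ((f g1 g2, \<one>\<^bsub>G\<^esub>) \<otimes>\<^bsub>crossed_product H G \<alpha> f\<^esub> (\<one>\<^bsub>H\<^esub>, g1 \<otimes>\<^bsub>G\<^esub> g2))"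
      using gg[OF that] by simp
    then show ?thesis
      unfolding psim[of "\<one>\<^bsub>H\<^esub>" g1 "\<one>\<^bsub>H\<^esub>" g2, OF H.one_closed that(1) H.one_closed that(2)]
        psim[of "f g1 g2" "\<one>\<^bsub>G\<^esub>" "\<one>\<^bsub>H\<^esub>" "g1 \<otimes>\<^bsub>G\<^esub> g2", OF fC[OF that] G.one_closed H.one_closed G.m_closed[OF that]]
      by simp
  qed
  have E_hh: "fst (\<psi> (h \<otimes>\<^bsub>H\<^esub> h', \<one>\<^bsub>G\<^esub>)) = fst (\<psi> (h, \<one>\<^bsub>G\<^esub>)) \<otimes>\<^bsub>H\<^esub> fst (\<psi> (h', \<one>\<^bsub>G\<^esub>))
     \<and> snd (\<psi> (h \<otimes>\<^bsub>H\<^esub> h', \<one>\<^bsub>G\<^esub>)) = snd (\<psi> (h, \<one>\<^bsub>G\<^esub>)) \<otimes>\<^bsub>G\<^esub> snd (\<psi> (h', \<one>\<^bsub>G\<^esub>))"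
    if "h \<in> carrier H" "h' \<in> carrier H" for h h'
    using psim[of h "\<one>\<^bsub>G\<^esub>" h' "\<one>\<^bsub>G\<^esub>", OF that(1) G.one_closed that(2) G.one_closed] hh[OF that] by simp
  show "Psi H G \<psi> \<in> crossed_quadruples H G \<alpha> f"
    unfolding Psi_def crossed_quadruples_def mem_Collect_eq prod.case
  proof (intro conjI ballI IntI)
    show "(\<lambda>h\<in>carrier H. snd (\<psi> (h, \<one>\<^bsub>G\<^esub>))) \<in> hom H G"
      by (rule homI) (simp_all add: psiC E_hh)
    show "(\<lambda>h\<in>carrier H. fst (\<psi> (h, \<one>\<^bsub>G\<^esub>))) \<in> hom H H"
      by (rule homI) (simp_all add: psiC E_hh)
    show "(\<lambda>g\<in>carrier G. fst (\<psi> (\<one>\<^bsub>H\<^esub>, g))) \<in> carrier G \<rightarrow>\<^sub>E carrier H"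
      by (simp add: psiC)
    show "(\<lambda>g\<in>carrier G. snd (\<psi> (\<one>\<^bsub>H\<^esub>, g))) \<in> carrier G \<rightarrow>\<^sub>E carrier G"
      by (simp add: psiC)
  qed (simp_all add: E_gh E_gg aC fC)
qed


lemma main_bij:
  fixes H :: "'h monoid" and G :: "'g monoid"
  assumes ncs: "normalized_crossed_system H G \<alpha> f"
  shows "bij_betw (Phi H G) (crossed_quadruples H G \<alpha> f)
           (hom (crossed_product H G \<alpha> f) (H \<times>\<times> G) \<inter> extensional (carrier H \<times> carrier G))"
proof (rule bij_betwI[where g = "Psi H G"])
  interpret H: group H using ncs_ax(1)[OF ncs] .
  interpret G: group G using ncs_ax(2)[OF ncs] .
  note f11 = ncs_ax(5)[OF ncs]
  show "Phi H G \<in> crossed_quadruples H G \<alpha> f \<rightarrow>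
      hom (crossed_product H G \<alpha> f) (H \<times>\<times> G) \<inter> extensional (carrier H \<times> carrier G)"
  proof
    fix q assume q: "q \<in> crossed_quadruples H G \<alpha> f"
    obtain s u r v where qq: "q = (s, u, r, v)" by (cases q) auto
    show "Phi H G q \<in> hom (crossed_product H G \<alpha> f) (H \<times>\<times> G) \<inter> extensional (carrier H \<times> carrier G)"
      using fwd[OF ncs q[unfolded qq]] by (simp add: qq Phi_def)
  qed
  show "Psi H G \<in> hom (crossed_product H G \<alpha> f) (H \<times>\<times> G) \<inter> extensional (carrier H \<times> carrier G)
      \<rightarrow> crossed_quadruples H G \<alpha> f"
    using bwd(1)[OF ncs] by blast
  show "Psi H G (Phi H G q) = q" if q: "q \<in> crossed_quadruples H G \<alpha> f" for q
  proof -
    obtain s u r v where qq: "q = (s, u, r, v)" by (cases q) auto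
    note Q = quad_facts[OF q[unfolded qq]]
    have uC: "\<And>h. h \<in> carrier H \<Longrightarrow> u h \<in> carrier H" by (rule hom_in_carrier[OF Q(3)])
    have sC: "\<And>h. h \<in> carrier H \<Longrightarrow> s h \<in> carrier G" by (rule hom_in_carrier[OF Q(1)])
    have rC: "\<And>g. g \<in> carrier G \<Longrightarrow> r g \<in> carrier H" by (rule PiE_mem[OF Q(5)])
    have vC: "\<And>g. g \<in> carrier G \<Longrightarrow> v g \<in> carrier G" by (rule PiE_mem[OF Q(6)])
    have u1: "u \<one>\<^bsub>H\<^esub> = \<one>\<^bsub>H\<^esub>" by (rule hom_one[OF Q(3) H.group_axioms H.group_axioms])
    have s1: "s \<one>\<^bsub>H\<^esub> = \<one>\<^bsub>G\<^esub>" by (rule hom_one[OF Q(1) H.group_axioms G.group_axioms])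
    have r1: "r \<one>\<^bsub>G\<^esub> = \<one>\<^bsub>H\<^esub>"
    proof -
      have "r \<one>\<^bsub>G\<^esub> \<otimes>\<^bsub>H\<^esub> r \<one>\<^bsub>G\<^esub> = r \<one>\<^bsub>G\<^esub>"
        using Q(9)[of "\<one>\<^bsub>G\<^esub>" "\<one>\<^bsub>G\<^esub>"] f11 u1 rC by simp
      then show ?thesis using rC by simp
    qed
    have v1: "v \<one>\<^bsub>G\<^esub> = \<one>\<^bsub>G\<^esub>"
    proof -
      have "v \<one>\<^bsub>G\<^esub> \<otimes>\<^bsub>G\<^esub> v \<one>\<^bsub>G\<^esub> = v \<one>\<^bsub>G\<^esub>"
        using Q(7)[of "\<one>\<^bsub>G\<^esub>" "\<one>\<^bsub>G\<^esub>"] f11 s1 vC by simp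
      then show ?thesis using vC by simp
    qed
    have e1: "(\<lambda>h\<in>carrier H. snd (Phi H G q (h, \<one>\<^bsub>G\<^esub>))) = s"
    proof
      fix z show "(\<lambda>h\<in>carrier H. snd (Phi H G q (h, \<one>\<^bsub>G\<^esub>))) z = s z"
        by (cases "z \<in> carrier H") (simp_all add: qq Phi_def v1 sC extensional_arb[OF Q(2)])
    qed
    have e2: "(\<lambda>h\<in>carrier H. fst (Phi H G q (h, \<one>\<^bsub>G\<^esub>))) = u"
    proof
      fix z show "(\<lambda>h\<in>carrier H. fst (Phi H G q (h, \<one>\<^bsub>G\<^esub>))) z = u z"
        by (cases "z \<in> carrier H") (simp_all add: qq Phi_def r1 uC extensional_arb[OF Q(4)])
    qed
    have e3: "(\<lambda>g\<in>carrier G. fst (Phi H G q (\<one>\<^bsub>H\<^esub>, g))) = r"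
    proof
      fix z show "(\<lambda>g\<in>carrier G. fst (Phi H G q (\<one>\<^bsub>H\<^esub>, g))) z = r z"
        by (cases "z \<in> carrier G") (simp_all add: qq Phi_def u1 rC PiE_arb[OF Q(5)])
    qed
    have e4: "(\<lambda>g\<in>carrier G. snd (Phi H G q (\<one>\<^bsub>H\<^esub>, g))) = v"
    proof
      fix z show "(\<lambda>g\<in>carrier G. snd (Phi H G q (\<one>\<^bsub>H\<^esub>, g))) z = v z"
        by (cases "z \<in> carrier G") (simp_all add: qq Phi_def s1 vC PiE_arb[OF Q(6)])
    qed
    show ?thesis unfolding Psi_def e1 e2 e3 e4 by (simp add: qq)
  qed
  show "Phi H G (Psi H G \<psi>) = \<psi>"
    if p: "\<psi> \<in> hom (crossed_product H G \<alpha> f) (H \<times>\<times> G) \<inter> extensional (carrier H \<times> carrier G)" for \<psi>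
  proof
    fix x :: "'h \<times> 'g"
    obtain h g where x: "x = (h, g)" by (cases x) auto
    show "Phi H G (Psi H G \<psi>) x = \<psi> x"
    proof (cases "h \<in> carrier H \<and> g \<in> carrier G")
      case True
      have "Phi H G (Psi H G \<psi>) x = (fst (\<psi> (h, \<one>\<^bsub>G\<^esub>)) \<otimes>\<^bsub>H\<^esub> fst (\<psi> (\<one>\<^bsub>H\<^esub>, g)),
                      snd (\<psi> (h, \<one>\<^bsub>G\<^esub>)) \<otimes>\<^bsub>G\<^esub> snd (\<psi> (\<one>\<^bsub>H\<^esub>, g)))"
        using True by (simp add: x Phi_def Psi_def)
      also have "\<dots> = \<psi> x"
        using bwd(3)[OF ncs IntD1[OF p], of h g] True by (simp add: x)
      finally show ?thesis .
    next
      case False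
      then show ?thesis by (auto simp: x Phi_def Psi_def extensional_arb[OF IntD2[OF p]])
    qed
  qed
qed

theorem corollary2p6:
  fixes H :: "'h monoid" and G :: "'g monoid"
    and \<alpha> :: "'g \<Rightarrow> 'h \<Rightarrow> 'h" and f :: "'g \<Rightarrow> 'g \<Rightarrow> 'h"
  assumes "normalized_crossed_system H G \<alpha> f"
  shows "bij_betw
           (\<lambda>(s, u, r, v). (\<lambda>x\<in>carrier H \<times> carrier G.
               (u (fst x) \<otimes>\<^bsub>H\<^esub> r (snd x), s (fst x) \<otimes>\<^bsub>G\<^esub> v (snd x))))
           (crossed_quadruples H G \<alpha> f)
           (hom (crossed_product H G \<alpha> f) (H \<times>\<times> G) \<inter> extensional (carrier H \<times> carrier G))"
  using main_bij[OF assms] unfolding Phi_def .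

end
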